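(* Let $\Gamma$ be a weighted digraph with Kirchhoff matrix $L$, out-forest dimension $d$, and normalized matrix of maximum out-forests $\bar J$. Then $\operatorname{rank}\bar J=d$, $\bar J^2=\bar J$, and $L\bar J=\bar J L=0$.
   Context: A weighted digraph $\Gamma$ has vertex set $\{1,\dots,n\}$, no loops, and each arc $j\to i$ ($j\ne i$) has a positive weight $a_{ij}$; $a_{ij}=0$ if there is no such arc. Its Kirchhoff matrix $L=[\ell_{ij}]$ has $\ell_{ij}=-a_{ij}$ for $j\ne i$ and $\ell_{ii}=\sum_{k\ne i}a_{ik}$. A diverging tree is a rooted directed tree with directed paths from its root to all its other vertices; an out-forest of $\Gamma$ is a spanning subgraph whose weak components are diverging trees; a maximum out-forest is an out-forest with the maximum number of arcs; the out-forest dimension $d$ is the number of trees in a maximum out-forest. The weight of a subgraph is the product of the weights of its arcs. The normalized matrix of maximum out-forests $\bar J=[\bar J_{ij}]$ is defined by: $\bar J_{ij}$ equals the total weight of those maximum out-forests of $\Gamma$ in which vertex $i$ belongs to the tree whose root is $j$, divided by the total weight of all maximum out-forests of $\Gamma$. *)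

theory Defs
  imports "HOL-Analysis.Analysis"
begin

text \<open>The weighted digraph is given by
  a nonnegative real matrix a, where a $ i $ j (for j \<noteq> i) is the weight of the arc j \<rightarrow> i,
  and the arc exists iff a $ i $ j > 0. An arc j \<rightarrow> i is represented as the pair (j, i).\<close>

definition arcs :: "real^'n^'n \<Rightarrow> ('n \<times> 'n) set" where
  "arcs a = {(j, i). j \<noteq> i \<and> a $ i $ j > 0}"

definition kirchhoff :: "real^'n^'n \<Rightarrow> real^'n^'n" where
  "kirchhoff a = (\<chi> i j. if i = j then (\<Sum>k\<in>UNIV - {i}. a $ i $ k) else - a $ i $ j)"

definition weak_comp :: "('n \<times> 'n) set \<Rightarrow> 'n \<Rightarrow> 'n set" where
  "weak_comp F i = {v. (i, v) \<in> (F \<union> F\<inverse>)\<^sup>*}"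

text \<open>A diverging tree with vertex set C and arc set T: a rooted directed tree
  (underlying graph a tree, i.e. connected with card C - 1 arcs) with directed paths
  from its root r to all other vertices.\<close>
definition diverging_tree :: "'n set \<Rightarrow> ('n \<times> 'n) set \<Rightarrow> bool" where
  "diverging_tree C T \<longleftrightarrow> T \<subseteq> C \<times> C \<and> card T + 1 = card C \<and>
     (\<exists>r\<in>C. \<forall>v\<in>C. (r, v) \<in> T\<^sup>*)"

definition out_forest :: "real^'n^'n \<Rightarrow> ('n \<times> 'n) set \<Rightarrow> bool" where
  "out_forest a F \<longleftrightarrow> F \<subseteq> arcs a \<and>
     (\<forall>i. diverging_tree (weak_comp F i) (F \<inter> (weak_comp F i \<times> weak_comp F i)))"

definition max_out_forest :: "real^'n^'n \<Rightarrow> ('n \<times> 'n) set \<Rightarrow> bool" where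
  "max_out_forest a F \<longleftrightarrow> out_forest a F \<and> (\<forall>G. out_forest a G \<longrightarrow> card G \<le> card F)"

definition num_trees :: "('n \<times> 'n) set \<Rightarrow> nat" where
  "num_trees F = card (range (weak_comp F))"

definition out_forest_dim :: "real^'n^'n \<Rightarrow> nat" where
  "out_forest_dim a = num_trees (SOME F. max_out_forest a F)"

definition in_tree_rooted_at :: "('n \<times> 'n) set \<Rightarrow> 'n \<Rightarrow> 'n \<Rightarrow> bool" where
  "in_tree_rooted_at F i j \<longleftrightarrow> j \<in> weak_comp F i \<and> (\<forall>v\<in>weak_comp F i. (j, v) \<in> F\<^sup>*)"

definition weight :: "real^'n^'n \<Rightarrow> ('n \<times> 'n) set \<Rightarrow> real" where
  "weight a F = (\<Prod>(j, i)\<in>F. a $ i $ j)"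

definition norm_max_out_forest_matrix :: "real^'n^'n \<Rightarrow> real^'n^'n" where
  "norm_max_out_forest_matrix a =
     (\<chi> i j. (\<Sum>F\<in>{F. max_out_forest a F \<and> in_tree_rooted_at F i j}. weight a F)
            / (\<Sum>F\<in>{F. max_out_forest a F}. weight a F))"

end

theory Submission
  imports Defs
begin


lemma mat_entry_axis: "((X::real^'n^'n) *v axis k 1) $ i = X $ i $ k"
  by (simp add: matrix_vector_mult_basis column_def)

lemma rank_idempotent:
  fixes P :: "real^'n^'n"
  assumes PP: "P ** P = P"
  shows "real (rank P) = trace P"
proof -
  define S1 where "S1 = range (\<lambda>x. P *v x)"
  define S2 where "S2 = range (\<lambda>x. x - P *v x)"
  have fix1: "P *v y = y" if y: "y \<in> S1" for y
  proof -
    obtain x where "y = P *v x" using y unfolding S1_def by blast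
    then show ?thesis by (simp add: matrix_vector_mul_assoc PP)
  qed
  have ker2: "P *v y = 0" if y: "y \<in> S2" for y
  proof -
    obtain x where "y = x - P *v x" using y unfolding S2_def by blast
    then show ?thesis by (simp add: matrix_vector_mul_assoc PP matrix_vector_mult_diff_distrib)
  qed
  have lin1: "linear (\<lambda>x. P *v x)" by (rule matrix_vector_mul_linear)
  have lin2: "linear (\<lambda>x. x - P *v x)"
    by (intro linear_compose_sub matrix_vector_mul_linear bounded_linear.linear bounded_linear_ident)
  have sub1: "subspace S1" unfolding S1_def by (rule linear_subspace_image[OF lin1 subspace_UNIV])
  have sub2: "subspace S2" unfolding S2_def by (rule linear_subspace_image[OF lin2 subspace_UNIV])
  have int: "S1 \<inter> S2 = {0}"
  proof
    show "S1 \<inter> S2 \<subseteq> {0}" using fix1 ker2 by force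
    show "{0} \<subseteq> S1 \<inter> S2" using sub1 sub2 by (simp add: subspace_0)
  qed
  have sum: "{x + y |x y. x \<in> S1 \<and> y \<in> S2} = UNIV"
  proof -
    have "z \<in> {x + y |x y. x \<in> S1 \<and> y \<in> S2}" for z
    proof -
      have "z = P *v z + (z - P *v z)" by simp
      moreover have "P *v z \<in> S1" "z - P *v z \<in> S2" by (auto simp: S1_def S2_def)
      ultimately show ?thesis by blast
    qed
    then show ?thesis by blast
  qed
  have dims: "dim S1 + dim S2 = CARD('n)"
    using dim_sums_Int[OF sub1 sub2] int sum by simp
  obtain B1 where B1: "B1 \<subseteq> S1" "independent B1" "S1 \<subseteq> span B1" "card B1 = dim S1"
    using basis_exists by blast
  obtain B2 where B2: "B2 \<subseteq> S2" "independent B2" "S2 \<subseteq> span B2" "card B2 = dim S2"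
    using basis_exists by blast
  have fB1: "finite B1" "finite B2" using B1 B2 by (auto intro: finiteI_independent)
  obtain U1 :: "'n set" where U1: "card U1 = card B1"
    using obtain_subset_with_card_n[of "card B1" "UNIV :: 'n set"] dims B1 by force
  define U2 where "U2 = UNIV - U1"
  have U2: "card U2 = card B2" unfolding U2_def using U1 dims B1 B2
    by (simp add: card_Diff_subset)
  obtain b1 where b1: "bij_betw b1 U1 B1" using finite_same_card_bij[of U1 B1] U1 fB1 by auto
  obtain b2 where b2: "bij_betw b2 U2 B2" using finite_same_card_bij[of U2 B2] U2 fB1 by auto
  define b where "b k = (if k \<in> U1 then b1 k else b2 k)" for k
  have bB1: "b k \<in> B1" if "k \<in> U1" for k using b1 that by (auto simp: b_def bij_betw_def)
  have bB2: "b k \<in> B2" if "k \<notin> U1" for k using b2 that by (auto simp: b_def bij_betw_def U2_def)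
  define S :: "real^'n^'n" where "S = (\<chi> i k. b k $ i)"
  have Sax: "S *v axis k 1 = b k" for k
    by (simp add: vec_eq_iff mat_entry_axis S_def)
  define R where "R = range (\<lambda>x. S *v x)"
  have subR: "subspace R" unfolding R_def
    by (rule linear_subspace_image[OF matrix_vector_mul_linear subspace_UNIV])
  have "B1 \<subseteq> R"
  proof
    fix y assume "y \<in> B1"
    then obtain k where "k \<in> U1" "y = b1 k" using b1 by (auto simp: bij_betw_def)
    then have "y = S *v axis k 1" using Sax b_def by simp
    then show "y \<in> R" by (simp add: R_def)
  qed
  then have "span B1 \<subseteq> R" using subR by (simp add: span_minimal)
  have "B2 \<subseteq> R"
  proof
    fix y assume "y \<in> B2"
    then obtain k where "k \<in> U2" "y = b2 k" using b2 by (auto simp: bij_betw_def)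
    then have "y = S *v axis k 1" using Sax b_def U2_def by simp
    then show "y \<in> R" by (simp add: R_def)
  qed
  then have "span B2 \<subseteq> R" using subR by (simp add: span_minimal)
  have "surj (\<lambda>x. S *v x)"
  proof -
    have "z \<in> R" for z
    proof -
      have "z = P *v z + (z - P *v z)" by simp
      moreover have "P *v z \<in> R" using B1(3) \<open>span B1 \<subseteq> R\<close> by (auto simp: S1_def)
      moreover have "z - P *v z \<in> R" using B2(3) \<open>span B2 \<subseteq> R\<close> by (auto simp: S2_def)
      ultimately show ?thesis using subR by (metis subspace_add)
    qed
    then show ?thesis by (auto simp: R_def)
  qed
  then obtain S' where SS': "S ** S' = mat 1" using matrix_right_invertible_surjective by blast
  then have S'S: "S' ** S = mat 1" using matrix_left_right_inverse by blast
  have "trace P = trace (P ** (S ** S'))" by (simp add: SS')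
  also have "\<dots> = trace ((P ** S) ** S')" by (simp add: matrix_mul_assoc)
  also have "\<dots> = trace (S' ** (P ** S))" by (rule trace_mul_sym)
  also have "\<dots> = (\<Sum>k\<in>UNIV. if k \<in> U1 then 1 else 0)"
  proof -
    have "(S' ** (P ** S)) $ k $ k = (if k \<in> U1 then 1 else 0)" for k
    proof -
      have "(S' ** (P ** S)) $ k $ k = ((S' ** (P ** S)) *v axis k 1) $ k" by (simp add: mat_entry_axis)
      also have "(S' ** (P ** S)) *v axis k 1 = S' *v (P *v b k)"
        by (simp add: matrix_vector_mul_assoc[symmetric] Sax)
      also have "\<dots> = (if k \<in> U1 then axis k 1 else 0)"
      proof (cases "k \<in> U1")
        case True
        then have "P *v b k = b k" using bB1 B1(1) fix1 by blast
        moreover have "S' *v b k = axis k 1"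
          by (metis Sax S'S matrix_vector_mul_assoc matrix_vector_mul_lid)
        ultimately show ?thesis using True by simp
      next
        case False
        then have "P *v b k = 0" using bB2 B2(1) ker2 by blast
        then show ?thesis using False by simp
      qed
      finally show ?thesis by (simp add: axis_def)
    qed
    then show ?thesis by (simp add: trace_def)
  qed
  also have "\<dots> = real (card U1)" by (simp add: sum.If_cases)
  also have "\<dots> = real (rank P)" using U1 B1 by (simp add: rank_dim_range S1_def)
  finally show ?thesis ..
qed




definition indeg1 :: "('n \<times> 'n) set \<Rightarrow> bool" where
  "indeg1 F \<longleftrightarrow> (\<forall>u u' v. (u,v)\<in>F \<longrightarrow> (u',v)\<in>F \<longrightarrow> u = u')"

definition noparent :: "('n \<times> 'n) set \<Rightarrow> 'n \<Rightarrow> bool" where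
  "noparent F v \<longleftrightarrow> (\<forall>u. (u,v) \<notin> F)"

definition forest :: "('n \<times> 'n) set \<Rightarrow> bool" where
  "forest F \<longleftrightarrow> indeg1 F \<and> acyclic F"

definition froot :: "('n \<times> 'n) set \<Rightarrow> 'n \<Rightarrow> 'n" where
  "froot F i = (THE r. noparent F r \<and> (r,i) \<in> F\<^sup>*)"

lemma root_exists:
  fixes F :: "('n::finite \<times> 'n) set"
  assumes "acyclic F"
  shows "\<exists>r. noparent F r \<and> (r,i) \<in> F\<^sup>*"
proof -
  have "wf F" using finite_acyclic_wf[OF _ assms] by simp
  then show ?thesis
  proof (induction i rule: wf_induct_rule)
    case (less i)
    show ?case
    proof (cases "noparent F i")
      case True then show ?thesis by blast
    next
      case False
      then obtain u where u: "(u,i) \<in> F" by (auto simp: noparent_def)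
      with less obtain r where "noparent F r" "(r,u) \<in> F\<^sup>*" by blast
      then show ?thesis using u by (meson rtrancl.rtrancl_into_rtrancl)
    qed
  qed
qed

lemma noparent_rtrancl: "noparent F r \<Longrightarrow> (x,r) \<in> F\<^sup>* \<Longrightarrow> x = r"
  by (auto elim: rtranclE simp: noparent_def)

lemma indeg1_eq: "indeg1 F \<Longrightarrow> (u,v)\<in>F \<Longrightarrow> (u',v)\<in>F \<Longrightarrow> u = u'"
  by (auto simp: indeg1_def)

lemma indeg1_comparable:
  assumes "indeg1 F" "(x,i) \<in> F\<^sup>*" "(y,i) \<in> F\<^sup>*"
  shows "(x,y) \<in> F\<^sup>* \<or> (y,x) \<in> F\<^sup>*"
  using assms(2,3)
proof (induction arbitrary: y rule: rtrancl_induct)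
  case base then show ?case by simp
next
  case (step z i)
  show ?case
  proof (cases "y = i")
    case True with step show ?thesis by (meson rtrancl.rtrancl_into_rtrancl)
  next
    case False
    with step.prems obtain w where w: "(y,w) \<in> F\<^sup>*" "(w,i) \<in> F" by (metis rtranclE)
    with step.hyps(2) assms(1) have "w = z" by (auto simp: indeg1_def)
    with step.IH w show ?thesis by blast
  qed
qed

lemma root_eq:
  fixes F :: "('n::finite \<times> 'n) set"
  assumes "forest F"
  shows "froot F i = r \<longleftrightarrow> noparent F r \<and> (r,i) \<in> F\<^sup>*"
proof -
  have uniq: "r1 = r2" if "noparent F r1" "(r1,i)\<in>F\<^sup>*" "noparent F r2" "(r2,i)\<in>F\<^sup>*" for r1 r2
    using indeg1_comparable[of F r1 i r2] that assms noparent_rtrancl unfolding forest_def by metis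
  obtain r0 where r0: "noparent F r0" "(r0,i)\<in>F\<^sup>*" using root_exists assms forest_def by blast
  have "froot F i = r0" unfolding froot_def using r0 uniq by (intro the_equality) auto
  then show ?thesis using r0 uniq by auto
qed

lemma root_props:
  fixes F :: "('n::finite \<times> 'n) set"
  assumes "forest F"
  shows "noparent F (froot F i)" "(froot F i, i) \<in> F\<^sup>*"
  using root_eq[OF assms] by auto

lemma root_step:
  fixes F :: "('n::finite \<times> 'n) set"
  assumes "forest F" "(x,y) \<in> F\<^sup>*"
  shows "froot F y = froot F x"
  using root_props[OF assms(1), of x] assms root_eq[OF assms(1)] by (meson rtrancl_trans)

lemma root_noparent:
  fixes F :: "('n::finite \<times> 'n) set"
  assumes "forest F" "noparent F r"
  shows "froot F r = r"
  using root_eq[OF assms(1)] assms(2) by auto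

lemma weak_comp_eq:
  fixes F :: "('n::finite \<times> 'n) set"
  assumes "forest F"
  shows "weak_comp F i = {v. froot F v = froot F i}"
proof
  show "weak_comp F i \<subseteq> {v. froot F v = froot F i}"
  proof
    fix v assume "v \<in> weak_comp F i"
    then have "(i,v) \<in> (F \<union> F\<inverse>)\<^sup>*" by (simp add: weak_comp_def)
    then have "froot F v = froot F i"
    proof (induction rule: rtrancl_induct)
      case base then show ?case by simp
    next
      case (step y z)
      then show ?case using root_step[OF assms r_into_rtrancl, of y z] root_step[OF assms r_into_rtrancl, of z y] by auto
    qed
    then show "v \<in> {v. froot F v = froot F i}" by simp
  qed
next
  show "{v. froot F v = froot F i} \<subseteq> weak_comp F i"
  proof
    fix v assume "v \<in> {v. froot F v = froot F i}"
    then have v: "froot F v = froot F i" by simp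
    have "(froot F i, i) \<in> F\<^sup>*" using root_props[OF assms] by auto
    then have "(i, froot F i) \<in> (F\<inverse>)\<^sup>*" by (simp add: rtrancl_converseI)
    then have 1: "(i, froot F i) \<in> (F \<union> F\<inverse>)\<^sup>*" by (meson Un_upper2 rtrancl_mono subsetD)
    have "(froot F i, v) \<in> F\<^sup>*" using root_props[OF assms, of v] v by auto
    then have 2: "(froot F i, v) \<in> (F \<union> F\<inverse>)\<^sup>*" by (meson Un_upper1 rtrancl_mono subsetD)
    from 1 2 show "v \<in> weak_comp F i" by (simp add: weak_comp_def)
  qed
qed

lemma in_tree_iff:
  fixes F :: "('n::finite \<times> 'n) set"
  assumes "forest F"
  shows "in_tree_rooted_at F i j \<longleftrightarrow> froot F i = j"
proof
  assume H: "in_tree_rooted_at F i j"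
  let ?r = "froot F i"
  have "?r \<in> weak_comp F i" using weak_comp_eq[OF assms] root_noparent[OF assms root_props(1)[OF assms]]
    by simp
  then have "(j, ?r) \<in> F\<^sup>*" using H by (simp add: in_tree_rooted_at_def)
  then show "froot F i = j" using noparent_rtrancl root_props(1)[OF assms] by metis
next
  assume H: "froot F i = j"
  have "froot F j = j" using H root_noparent[OF assms root_props(1)[OF assms]] by metis
  then have "j \<in> weak_comp F i" using weak_comp_eq[OF assms] H
    by simp
  moreover have "\<forall>v\<in>weak_comp F i. (j,v) \<in> F\<^sup>*"
  proof
    fix v assume "v \<in> weak_comp F i"
    then have "froot F v = froot F i" using weak_comp_eq[OF assms, of i] by blast
    then have "froot F v = j" using H by simp
    then show "(j,v) \<in> F\<^sup>*" using root_props(2)[OF assms, of v] by simp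
  qed
  ultimately show "in_tree_rooted_at F i j" by (simp add: in_tree_rooted_at_def)
qed

lemma rooted_acyclic:
  assumes ind: "indeg1 F" and rt: "\<And>v. \<exists>r. noparent F r \<and> (r,v) \<in> F\<^sup>*"
  shows "acyclic F"
proof -
  have "(x,x) \<notin> F\<^sup>+" if "noparent F r" "(r,x) \<in> F\<^sup>*" for r x
    using that(2)
  proof (induction rule: rtrancl_induct)
    case base
    then show ?case using that(1) by (auto elim: tranclE simp: noparent_def)
  next
    case (step x y)
    show ?case
    proof
      assume "(y,y) \<in> F\<^sup>+"
      then show False
      proof (cases rule: tranclE)
        case base
        then have "y = x" using indeg1_eq[OF ind step.hyps(2)] by blast
        then show False using step base by auto
      next
        case (step c)
        then have "c = x" using indeg1_eq[OF ind \<open>(x,y)\<in>F\<close>] by blast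
        then have "(y,x) \<in> F\<^sup>+" using step by simp
        then have "(x,x) \<in> F\<^sup>+" using \<open>(x,y)\<in>F\<close> by (meson trancl_into_trancl2)
        then show False using \<open>(x,x) \<notin> F\<^sup>+\<close> by simp
      qed
    qed
  qed
  then show ?thesis unfolding acyclic_def using rt by blast
qed

lemma weak_comp_refl: "i \<in> weak_comp F i"
  by (simp add: weak_comp_def)

lemma weak_comp_sym_eq:
  assumes "v \<in> weak_comp F i" shows "weak_comp F v = weak_comp F i"
proof -
  have s: "(x,y) \<in> (F \<union> F\<inverse>)\<^sup>* \<Longrightarrow> (y,x) \<in> (F \<union> F\<inverse>)\<^sup>*" for x y
  proof -
    assume "(x,y) \<in> (F \<union> F\<inverse>)\<^sup>*"
    then have "(y,x) \<in> ((F \<union> F\<inverse>)\<inverse>)\<^sup>*" by (simp add: rtrancl_converseI)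
    moreover have "(F \<union> F\<inverse>)\<inverse> = F \<union> F\<inverse>" by auto
    ultimately show ?thesis by simp
  qed
  from assms have "(i,v) \<in> (F \<union> F\<inverse>)\<^sup>*" by (simp add: weak_comp_def)
  then show ?thesis unfolding weak_comp_def using s by (meson rtrancl_trans)
qed

lemma arc_in_weak_comp:
  assumes "(u,v) \<in> F" shows "u \<in> weak_comp F v" "v \<in> weak_comp F u"
proof -
  have "(v,u) \<in> F \<union> F\<inverse>" "(u,v) \<in> F \<union> F\<inverse>" using assms by auto
  then show "u \<in> weak_comp F v" "v \<in> weak_comp F u" by (auto simp: weak_comp_def)
qed

lemma inj_snd_eq: "inj_on snd T \<Longrightarrow> (u,v) \<in> T \<Longrightarrow> (u',v) \<in> T \<Longrightarrow> u = u'"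
  unfolding inj_on_def by fastforce

lemma out_forest_iff:
  fixes a :: "real^'n^'n"
  shows "out_forest a F \<longleftrightarrow> F \<subseteq> arcs a \<and> forest F"
proof
  assume H: "out_forest a F"
  then have sub: "F \<subseteq> arcs a" by (simp add: out_forest_def)
  have dt: "diverging_tree (weak_comp F i) (F \<inter> (weak_comp F i \<times> weak_comp F i))" for i
    using H by (simp add: out_forest_def)
  have key: "inj_on snd (F \<inter> (weak_comp F i \<times> weak_comp F i)) \<and>
      (\<exists>r\<in>weak_comp F i. noparent F r \<and> (\<forall>v\<in>weak_comp F i. (r,v) \<in> F\<^sup>*))" for i
  proof -
    let ?C = "weak_comp F i"
    let ?T = "F \<inter> (?C \<times> ?C)"
    obtain r where r: "r \<in> ?C" "\<forall>v\<in>?C. (r,v) \<in> ?T\<^sup>*" and cT: "card ?T + 1 = card ?C"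
      and TC: "?T \<subseteq> ?C \<times> ?C"
      using dt[of i] unfolding diverging_tree_def by blast
    have fin: "finite ?C" "finite ?T" by auto
    have sup: "?C - {r} \<subseteq> snd ` ?T"
    proof
      fix x assume x: "x \<in> ?C - {r}"
      then have "(r,x) \<in> ?T\<^sup>*" using r by auto
      then obtain y where "(y,x) \<in> ?T" using x by (auto elim: rtranclE)
      then show "x \<in> snd ` ?T" by force
    qed
    have sub2: "snd ` ?T \<subseteq> ?C" using TC by auto
    have c1: "card (?C - {r}) = card ?T" using cT r(1) fin by simp
    have "card (?C - {r}) \<le> card (snd ` ?T)" using sup fin by (intro card_mono) auto
    moreover have "card (snd ` ?T) \<le> card ?T" using card_image_le[OF fin(2)] .
    ultimately have eqc: "card (snd ` ?T) = card ?T" using c1 by simp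
    then have inj: "inj_on snd ?T" using fin by (simp add: eq_card_imp_inj_on)
    have "snd ` ?T = ?C - {r}"
    proof (rule card_subset_eq[symmetric])
      show "finite (snd ` ?T)" using fin by simp
      show "?C - {r} \<subseteq> snd ` ?T" by (rule sup)
      show "card (?C - {r}) = card (snd ` ?T)" using eqc c1 by simp
    qed
    then have nr: "noparent F r"
      unfolding noparent_def
    proof (intro allI notI)
      fix u assume "snd ` ?T = ?C - {r}" "(u,r) \<in> F"
      then have "u \<in> weak_comp F r" using arc_in_weak_comp by metis
      then have "u \<in> ?C" using weak_comp_sym_eq[OF r(1)] by simp
      then have "(u,r) \<in> ?T" using \<open>(u,r)\<in>F\<close> r(1) by simp
      then show False using \<open>snd ` ?T = ?C - {r}\<close> by force
    qed
    have "\<forall>v\<in>?C. (r,v) \<in> F\<^sup>*" using r(2) by (meson Int_lower1 rtrancl_mono subsetD)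
    then show ?thesis using inj nr r(1) by blast
  qed
  have ind: "indeg1 F"
    unfolding indeg1_def
  proof (intro allI impI)
    fix u u' v assume uv: "(u,v) \<in> F" "(u',v) \<in> F"
    have "u \<in> weak_comp F v" "u' \<in> weak_comp F v" using uv arc_in_weak_comp by metis+
    then have m1: "(u,v) \<in> F \<inter> (weak_comp F v \<times> weak_comp F v)" and m2: "(u',v) \<in> F \<inter> (weak_comp F v \<times> weak_comp F v)"
      using uv weak_comp_refl by auto
    have i: "inj_on snd (F \<inter> (weak_comp F v \<times> weak_comp F v))" using key[of v] by blast
    have "(u,v) = (u',v)" using inj_snd_eq[OF i m1 m2] by simp
    then show "u = u'" by simp
  qed
  have rt: "\<exists>r. noparent F r \<and> (r,v) \<in> F\<^sup>*" for v
  proof -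
    obtain r where "noparent F r" "\<forall>x\<in>weak_comp F v. (r,x) \<in> F\<^sup>*" using key[of v] by blast
    then show ?thesis using weak_comp_refl[of v F] by blast
  qed
  show "F \<subseteq> arcs a \<and> forest F" using sub ind rooted_acyclic[OF ind rt] by (simp add: forest_def)
next
  assume H: "F \<subseteq> arcs a \<and> forest F"
  then have fo: "forest F" by simp
  have "diverging_tree (weak_comp F i) (F \<inter> (weak_comp F i \<times> weak_comp F i))" for i
  proof -
    let ?r = "froot F i"
    define C where "C = weak_comp F i"
    have C: "C = {v. froot F v = ?r}" using weak_comp_eq[OF fo] C_def by simp
    have rC: "?r \<in> C" using C root_noparent[OF fo root_props(1)[OF fo]] by simp
    have ind: "indeg1 F" using fo by (simp add: forest_def)
    have np: "noparent F ?r" using root_props[OF fo] by simp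
    let ?T = "F \<inter> (C \<times> C)"
    have bij: "bij_betw snd ?T (C - {?r})"
      unfolding bij_betw_def
    proof
      show "inj_on snd ?T" using ind by (auto simp: inj_on_def indeg1_def)
      show "snd ` ?T = C - {?r}"
      proof
        show "snd ` ?T \<subseteq> C - {?r}" using np by (auto simp: noparent_def)
        show "C - {?r} \<subseteq> snd ` ?T"
        proof
          fix v assume v: "v \<in> C - {?r}"
          then have "(?r, v) \<in> F\<^sup>*" using C root_props(2)[OF fo, of v] by auto
          then obtain u where u: "(u,v) \<in> F" using v by (auto elim: rtranclE)
          then have "froot F u = ?r" using root_step[OF fo r_into_rtrancl[OF u]] v C by auto
          then have "(u,v) \<in> ?T" using u v C by auto
          then show "v \<in> snd ` ?T" by force
        qed
      qed
    qed
    have "card ?T = card (C - {?r})" using bij_betw_same_card[OF bij] .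
    moreover have "card C > 0" using rC by (auto simp: card_gt_0_iff)
    ultimately have card: "card ?T + 1 = card C" using rC by (simp add: card_Diff_singleton)
    have reach: "(?r, v) \<in> ?T\<^sup>*" if "v \<in> C" for v
    proof -
      have "(?r, v) \<in> F\<^sup>*" using that C root_props(2)[OF fo, of v] by auto
      then show ?thesis
      proof (induction rule: rtrancl_induct)
        case base then show ?case by simp
      next
        case (step y z)
        have "froot F y = ?r" using root_step[OF fo step.hyps(1)] root_noparent[OF fo np] by simp
        moreover have "froot F z = ?r" using root_step[OF fo, of y z] step.hyps(2) calculation by auto
        ultimately have "(y,z) \<in> ?T" using step.hyps(2) C by auto
        then show ?case using step.IH by (meson rtrancl.rtrancl_into_rtrancl)
      qed
    qed
    show ?thesis unfolding diverging_tree_def C_def[symmetric] using card rC reach by blast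
  qed
  then show "out_forest a F" using H by (simp add: out_forest_def)
qed

lemma forest_card:
  fixes F :: "('n::finite \<times> 'n) set"
  assumes "forest F"
  shows "card F + card {r. noparent F r} = CARD('n)"
proof -
  have ind: "indeg1 F" using assms by (simp add: forest_def)
  have "bij_betw snd F (- {r. noparent F r})"
    unfolding bij_betw_def
  proof
    show "inj_on snd F" using ind by (auto simp: inj_on_def indeg1_def)
    show "snd ` F = - {r. noparent F r}" by (force simp: noparent_def)
  qed
  then have "card F = card (- {r. noparent F r})" by (rule bij_betw_same_card)
  moreover have "card (- {r. noparent F r}) + card {r. noparent F r} = CARD('n)"
    by (metis Compl_eq_Diff_UNIV card_Diff_subset finite add.commute le_add_diff_inverse
        card_mono subset_UNIV)
  ultimately show ?thesis by simp
qed

lemma num_trees_eq: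
  fixes F :: "('n::finite \<times> 'n) set"
  assumes fo: "forest F"
  shows "num_trees F = card {r. noparent F r}"
proof -
  have "range (weak_comp F) = weak_comp F ` {r. noparent F r}"
  proof
    show "range (weak_comp F) \<subseteq> weak_comp F ` {r. noparent F r}"
    proof
      fix C assume "C \<in> range (weak_comp F)"
      then obtain i where C: "C = weak_comp F i" by auto
      have "weak_comp F i = weak_comp F (froot F i)"
        using weak_comp_eq[OF fo] root_noparent[OF fo root_props(1)[OF fo]] by simp
      then show "C \<in> weak_comp F ` {r. noparent F r}" using C root_props(1)[OF fo] by blast
    qed
  qed auto
  moreover have "inj_on (weak_comp F) {r. noparent F r}"
  proof
    fix r1 r2 assume r: "r1 \<in> {r. noparent F r}" "r2 \<in> {r. noparent F r}" "weak_comp F r1 = weak_comp F r2"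
    then have "r1 \<in> weak_comp F r2" using weak_comp_refl by metis
    then have "froot F r1 = froot F r2" using weak_comp_eq[OF fo] by simp
    then show "r1 = r2" using r root_noparent[OF fo] by simp
  qed
  ultimately show ?thesis unfolding num_trees_def by (simp add: card_image)
qed




lemma crossing:
  assumes "(v,r) \<in> R\<^sup>*" "P r" "\<not> P v"
  shows "\<exists>x y. (x,y) \<in> R \<and> \<not> P x \<and> P y \<and> (y,r) \<in> R\<^sup>*"
  using assms
proof (induction rule: converse_rtrancl_induct)
  case base then show ?case by simp
next
  case (step v y)
  show ?case
  proof (cases "P y")
    case True then show ?thesis using step by blast
  next
    case False then show ?thesis using step by blast
  qed
qed

lemma avoid_in:
  assumes "(x,y) \<in> F\<^sup>*" "(t,y) \<notin> F\<^sup>*"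
  shows "(x,y) \<in> (F - {(s,t)})\<^sup>*"
  using assms
proof (induction rule: rtrancl_induct)
  case base then show ?case by simp
next
  case (step z y)
  have "(t,z) \<notin> F\<^sup>*" using step.prems step.hyps(2) by (meson rtrancl.rtrancl_into_rtrancl)
  then have "(x,z) \<in> (F - {(s,t)})\<^sup>*" using step.IH by simp
  moreover have "(z,y) \<noteq> (s,t)" using step.prems by auto
  ultimately show ?case using step.hyps(2) by (meson DiffI rtrancl.rtrancl_into_rtrancl singletonD)
qed

lemma avoid_out:
  assumes "(x,y) \<in> F\<^sup>*" "(x,s) \<notin> F\<^sup>*"
  shows "(x,y) \<in> (F - {(s,t)})\<^sup>*"
  using assms
proof (induction rule: rtrancl_induct)
  case base then show ?case by simp
next
  case (step z y)
  have "(z,y) \<noteq> (s,t)" using step.prems step.hyps(1) by auto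
  then show ?case using step by (meson DiffI rtrancl.rtrancl_into_rtrancl singletonD)
qed

lemma arcs_ne: "(u,v) \<in> arcs a \<Longrightarrow> u \<noteq> v"
  by (simp add: arcs_def)

lemma augment:
  fixes a :: "real^'n^'n"
  assumes "F \<subseteq> arcs a" "forest F" "noparent F r" "(v,r) \<in> (arcs a)\<^sup>*" "(r,v) \<notin> F\<^sup>*"
  shows "\<exists>G. G \<subseteq> arcs a \<and> forest G \<and> card G > card F"
  using assms
proof (induction "card {x. (r,x) \<in> F\<^sup>*}" arbitrary: F v rule: less_induct)
  case less
  obtain x y where xy: "(x,y) \<in> arcs a" "(r,x) \<notin> F\<^sup>*" "(r,y) \<in> F\<^sup>*" "(y,r) \<in> (arcs a)\<^sup>*"
    using crossing[OF less.prems(4), of "\<lambda>z. (r,z) \<in> F\<^sup>*"] less.prems(5) by auto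
  have ind: "indeg1 F" and acy: "acyclic F" using less.prems(2) by (auto simp: forest_def)
  have finF: "finite F" by simp
  show ?case
  proof (cases "y = r")
    case True
    let ?G = "insert (x,r) F"
    have "(x,r) \<notin> F" using less.prems(3) by (simp add: noparent_def)
    then have c: "card ?G = card F + 1" by (simp add: card_insert_if)
    have "indeg1 ?G" using ind less.prems(3) by (auto simp: indeg1_def noparent_def)
    moreover have "acyclic ?G" using acy xy(2) by simp
    moreover have "?G \<subseteq> arcs a" using xy(1) True less.prems(1) by simp
    ultimately show ?thesis using c by (intro exI[of _ ?G]) (simp add: forest_def)
  next
    case False
    obtain p where p: "(p,y) \<in> F" using xy(3) False by (auto elim: rtranclE)
    define F0 where "F0 = F - {(p,y)}"
    define G where "G = insert (x,y) F0"
    have xyF0: "(x,y) \<notin> F0" using indeg1_eq[OF ind _ p] by (auto simp: F0_def)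
    have "card F > 0" using p by (auto simp: card_gt_0_iff)
    then have cardG: "card G = card F"
      using xyF0 p by (simp add: G_def F0_def card_insert_if card_Diff_singleton card_gt_0_iff)
    have indG: "indeg1 G" using ind p by (auto simp: indeg1_def G_def F0_def)
    have F0F: "F0 \<subseteq> F" by (auto simp: F0_def)
    then have rF0: "F0\<^sup>* \<subseteq> F\<^sup>*" by (rule rtrancl_mono)
    have "(y,x) \<notin> F0\<^sup>*"
    proof
      assume "(y,x) \<in> F0\<^sup>*"
      then have "(y,x) \<in> F\<^sup>*" using rF0 by auto
      then show False using xy(2,3) by (meson rtrancl_trans)
    qed
    then have acyG: "acyclic G" using acyclic_subset[OF acy F0F] by (simp add: G_def)
    have GA: "G \<subseteq> arcs a" using less.prems(1) xy(1) by (auto simp: G_def F0_def)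
    have npG: "noparent G r" using less.prems(3) False by (auto simp: noparent_def G_def F0_def)
    have reachG: "(r,z) \<in> F\<^sup>*" if "(r,z) \<in> G\<^sup>*" for z
      using that
    proof (induction rule: rtrancl_induct)
      case base then show ?case by simp
    next
      case (step w z)
      show ?case
      proof (cases "(w,z) = (x,y)")
        case True then show ?thesis using step xy(2) by simp
      next
        case False then have "(w,z) \<in> F" using step.hyps(2) by (auto simp: G_def F0_def)
        then show ?thesis using step.IH by (meson rtrancl.rtrancl_into_rtrancl)
      qed
    qed
    have ryG: "(r,y) \<notin> G\<^sup>*"
    proof
      assume "(r,y) \<in> G\<^sup>*"
      then obtain w where w: "(r,w) \<in> G\<^sup>*" "(w,y) \<in> G" using False by (auto elim: rtranclE)
      have "(x,y) \<in> G" by (simp add: G_def)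
      then have "w = x" using indeg1_eq[OF indG w(2)] by simp
      then show False using reachG[OF w(1)] xy(2) by simp
    qed
    have "{z. (r,z) \<in> G\<^sup>*} \<subset> {z. (r,z) \<in> F\<^sup>*}" using reachG ryG xy(3) by auto
    then have lt: "card {z. (r,z) \<in> G\<^sup>*} < card {z. (r,z) \<in> F\<^sup>*}" by (rule psubset_card_mono[rotated]) simp
    have fG: "forest G" using indG acyG by (simp add: forest_def)
    obtain H where "H \<subseteq> arcs a" "forest H" "card H > card G"
      using less.hyps[OF lt GA fG npG xy(4) ryG] by blast
    then show ?thesis using cardG by auto
  qed
qed

lemma max_forest_iff:
  "max_out_forest a F \<longleftrightarrow> F \<subseteq> arcs a \<and> forest F \<and> (\<forall>G. G \<subseteq> arcs a \<and> forest G \<longrightarrow> card G \<le> card F)"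
  by (simp add: max_out_forest_def out_forest_iff)

lemma max_reach:
  fixes a :: "real^'n^'n"
  assumes "max_out_forest a F" "noparent F r" "(v,r) \<in> (arcs a)\<^sup>*"
  shows "(r,v) \<in> F\<^sup>*"
proof (rule ccontr)
  assume "(r,v) \<notin> F\<^sup>*"
  then obtain G where "G \<subseteq> arcs a" "forest G" "card G > card F"
    using augment[of F a r v] assms by (auto simp: max_forest_iff)
  then show False using assms(1) by (auto simp: max_forest_iff)
qed

definition par :: "('n \<times> 'n) set \<Rightarrow> 'n \<Rightarrow> 'n" where
  "par F v = (THE p. (p,v) \<in> F)"

lemma par_eq: "indeg1 F \<Longrightarrow> (p,v) \<in> F \<Longrightarrow> par F v = p"
  unfolding par_def by (rule the_equality) (auto simp: indeg1_def)

definition child :: "('n \<times> 'n) set \<Rightarrow> 'n \<Rightarrow> 'n \<Rightarrow> 'n" where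
  "child F j m = (THE c. (j,c) \<in> F \<and> (c,m) \<in> F\<^sup>*)"

lemma child_unique:
  assumes "forest F" "(j,c) \<in> F" "(c,m) \<in> F\<^sup>*" "(j,c') \<in> F" "(c',m) \<in> F\<^sup>*"
  shows "c = c'"
proof -
  have ind: "indeg1 F" and acy: "acyclic F" using assms(1) by (auto simp: forest_def)
  have one: "False" if h: "(c1,c2) \<in> F\<^sup>*" "c1 \<noteq> c2" "(j,c1) \<in> F" "(j,c2) \<in> F" for c1 c2
  proof -
    obtain z where z: "(c1,z) \<in> F\<^sup>*" "(z,c2) \<in> F" using h(1,2) by (auto elim: rtranclE)
    then have "z = j" using indeg1_eq[OF ind z(2) h(4)] by simp
    then have "(j,j) \<in> F\<^sup>+" using z(1) h(3) by (meson rtrancl_into_trancl2)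
    then show False using acy by (simp add: acyclic_def)
  qed
  show ?thesis using indeg1_comparable[OF ind assms(3) assms(5)] one assms(2,4) by blast
qed

lemma child_eq:
  assumes "forest F" "(j,c) \<in> F" "(c,m) \<in> F\<^sup>*"
  shows "child F j m = c"
  unfolding child_def using assms child_unique[OF assms(1)] by (intro the_equality) blast+

lemma weight_insert:
  fixes a :: "real^'n^'n"
  shows "e \<notin> F \<Longrightarrow> weight a (insert e F) = a $ snd e $ fst e * weight a F"
  unfolding weight_def by (cases e) (simp add: prod.insert)

lemma weight_remove:
  fixes a :: "real^'n^'n"
  shows "e \<in> F \<Longrightarrow> weight a F = a $ snd e $ fst e * weight a (F - {e})"
  using weight_insert[of e "F - {e}" a] by (simp add: insert_absorb)

lemma weight_pos:
  fixes a :: "real^'n^'n"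
  shows "F \<subseteq> arcs a \<Longrightarrow> weight a F > 0"
  unfolding weight_def by (intro prod_pos) (auto simp: arcs_def)

locale dg =
  fixes a :: "real^'n^'n"
  assumes nonneg: "\<And>i j. i \<noteq> j \<Longrightarrow> a $ i $ j \<ge> 0"
begin

definition "M = {F. max_out_forest a F}"
definition "W = (\<Sum>F\<in>M. weight a F)"
definition "Wt i j = (\<Sum>F\<in>M. if froot F i = j then weight a F else 0)"

lemma finM: "finite M" by simp

lemma ex_max: "\<exists>F. max_out_forest a F"
proof -
  let ?S = "{F. out_forest a F}"
  have fin: "finite (card ` ?S)" by simp
  have "{} \<in> ?S" by (simp add: out_forest_iff forest_def indeg1_def acyclic_def)
  then have ne: "card ` ?S \<noteq> {}" by blast
  obtain F where "F \<in> ?S" "card F = Max (card ` ?S)" using Max_in[OF fin ne] by auto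
  moreover have "card G \<le> Max (card ` ?S)" if "G \<in> ?S" for G using Max_ge[OF fin] that by simp
  ultimately show ?thesis by (auto simp: max_out_forest_def)
qed

lemma M_props:
  assumes "F \<in> M" shows "F \<subseteq> arcs a" "forest F" "max_out_forest a F" "indeg1 F" "acyclic F"
  using assms by (auto simp: M_def max_forest_iff forest_def)

lemma M_card: "F \<in> M \<Longrightarrow> G \<in> M \<Longrightarrow> card F = card G"
  by (auto simp: M_def max_forest_iff intro: antisym)

lemma M_intro: "F \<in> M \<Longrightarrow> G \<subseteq> arcs a \<Longrightarrow> forest G \<Longrightarrow> card G = card F \<Longrightarrow> G \<in> M"
  by (auto simp: M_def max_forest_iff)

lemma W_pos: "W > 0"
proof -
  obtain F where "F \<in> M" using ex_max by (auto simp: M_def)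
  then show ?thesis unfolding W_def using M_props(1)
    by (intro sum_pos2[of _ F]) (auto intro: less_imp_le weight_pos)
qed

lemma J_eq: "norm_max_out_forest_matrix a $ i $ j = Wt i j / W"
proof -
  have e1: "{F. max_out_forest a F \<and> in_tree_rooted_at F i j} = {F\<in>M. froot F i = j}"
    using in_tree_iff M_props(2) by (auto simp: M_def)
  have e2: "(\<Sum>F\<in>{F\<in>M. froot F i = j}. weight a F) = Wt i j"
    unfolding Wt_def by (rule sum.inter_filter[OF finM])
  have e3: "{F. max_out_forest a F} = M" by (simp add: M_def)
  have "norm_max_out_forest_matrix a $ i $ j = (\<Sum>F\<in>{F. max_out_forest a F \<and> in_tree_rooted_at F i j}. weight a F)
     / (\<Sum>F\<in>{F. max_out_forest a F}. weight a F)"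
    unfolding norm_max_out_forest_matrix_def by simp
  also have "\<dots> = Wt i j / W" unfolding e1 e2 e3 W_def ..
  finally show ?thesis .
qed

lemma a_zero: "k \<noteq> i \<Longrightarrow> (k,i) \<notin> arcs a \<Longrightarrow> a $ i $ k = 0"
  using nonneg[of i k] by (auto simp: arcs_def)

end




context dg
begin

lemma swap1:
  assumes FM: "F \<in> M" and ki: "(k,i) \<in> arcs a" and nk: "(i,k) \<notin> F\<^sup>*" and p: "(p,i) \<in> F"
  defines "F' \<equiv> insert (k,i) (F - {(p,i)})"
  shows "F' \<in> M" "(p,i) \<in> arcs a" "(k,i) \<in> F'" "(i,p) \<notin> F'\<^sup>*" "insert (p,i) (F' - {(k,i)}) = F"
        "froot F' i = froot F k" "a$i$p * weight a F' = a$i$k * weight a F"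
proof -
  have ind: "indeg1 F" and acy: "acyclic F" and FA: "F \<subseteq> arcs a" and fo: "forest F"
    using M_props[OF FM] by auto
  define F0 where "F0 = F - {(p,i)}"
  have F'eq: "F' = insert (k,i) F0" by (simp add: F'_def F0_def)
  have kF0: "(k,i) \<notin> F0" using indeg1_eq[OF ind _ p] by (auto simp: F0_def)
  have F0F: "F0 \<subseteq> F" by (auto simp: F0_def)
  have "card F > 0" using p by (auto simp: card_gt_0_iff)
  then have cF': "card F' = card F" using kF0 p by (simp add: F'eq F0_def card_insert_if card_Diff_singleton)
  have indF': "indeg1 F'" using ind p by (auto simp: indeg1_def F'eq F0_def)
  have "(i,k) \<notin> F0\<^sup>*" using nk rtrancl_mono[OF F0F] by auto
  then have acyF': "acyclic F'" using acyclic_subset[OF acy F0F] by (simp add: F'eq)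
  have F'A: "F' \<subseteq> arcs a" using FA ki by (auto simp: F'eq F0_def)
  have foF': "forest F'" using indF' acyF' by (simp add: forest_def)
  show "F' \<in> M" using M_intro[OF FM F'A foF' cF'] .
  show "(p,i) \<in> arcs a" using FA p by auto
  show kiF': "(k,i) \<in> F'" by (simp add: F'eq)
  have reach: "(i,z) \<in> F\<^sup>*" if "(i,z) \<in> F'\<^sup>*" for z
    using that
  proof (induction rule: rtrancl_induct)
    case base then show ?case by simp
  next
    case (step w z)
    show ?case
    proof (cases "(w,z) = (k,i)")
      case True then show ?thesis using step nk by simp
    next
      case False then have "(w,z) \<in> F" using step.hyps(2) by (auto simp: F'eq F0_def)
      then show ?thesis using step.IH by (meson rtrancl.rtrancl_into_rtrancl)
    qed
  qed
  show "(i,p) \<notin> F'\<^sup>*"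
  proof
    assume "(i,p) \<in> F'\<^sup>*"
    then have "(i,p) \<in> F\<^sup>*" by (rule reach)
    then have "(i,i) \<in> F\<^sup>+" using p by (meson rtrancl_into_trancl1)
    then show False using acy by (simp add: acyclic_def)
  qed
  show "insert (p,i) (F' - {(k,i)}) = F" using kF0 p by (auto simp: F'eq F0_def)
  show "froot F' i = froot F k"
  proof -
    let ?r = "froot F k"
    have np: "noparent F ?r" and rk: "(?r,k) \<in> F\<^sup>*" using root_props[OF fo] by auto
    have "?r \<noteq> i" using np p by (auto simp: noparent_def)
    then have npF': "noparent F' ?r" using np by (auto simp: noparent_def F'eq F0_def)
    have "(?r,k) \<in> F0\<^sup>*" unfolding F0_def by (rule avoid_in[OF rk nk])
    then have "(?r,k) \<in> F'\<^sup>*" using rtrancl_mono[of F0 F'] by (auto simp: F'eq)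
    then have "(?r,i) \<in> F'\<^sup>*" using kiF' by (meson rtrancl.rtrancl_into_rtrancl)
    then show ?thesis using root_eq[OF foF'] npF' by blast
  qed
  show "a$i$p * weight a F' = a$i$k * weight a F"
    using weight_insert[OF kF0, of a] weight_remove[OF p, of a] by (simp add: F'eq F0_def algebra_simps)
qed

lemma LJ_sum:
  "(\<Sum>k\<in>UNIV-{i}. a$i$k) * Wt i j = (\<Sum>k\<in>UNIV-{i}. a$i$k * Wt k j)"
proof -
  define P where "P = {k. (k,i) \<in> arcs a}"
  have PU: "P \<subseteq> UNIV - {i}" using arcs_ne by (auto simp: P_def)
  have z: "a$i$k = 0" if "k \<in> UNIV - {i} - P" for k using a_zero that by (auto simp: P_def)
  have s1: "(\<Sum>k\<in>UNIV-{i}. a$i$k) = (\<Sum>k\<in>P. a$i$k)"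
    by (rule sum.mono_neutral_right) (use PU z in auto)
  have s2: "(\<Sum>k\<in>UNIV-{i}. a$i$k * Wt k j) = (\<Sum>k\<in>P. a$i$k * Wt k j)"
    by (rule sum.mono_neutral_right) (use PU z in auto)
  define g where "g = (\<lambda>(F,k). if froot F i = j then a$i$k * weight a F else 0)"
  define h where "h = (\<lambda>(F,k). if froot F k = j then a$i$k * weight a F else 0)"
  have L: "(\<Sum>k\<in>P. a$i$k) * Wt i j = (\<Sum>x\<in>M\<times>P. g x)"
  proof -
    have "(\<Sum>x\<in>M\<times>P. g x) = (\<Sum>F\<in>M. \<Sum>k\<in>P. g (F,k))" by (simp add: sum.cartesian_product)
    also have "\<dots> = (\<Sum>k\<in>P. \<Sum>F\<in>M. g (F,k))" by (rule sum.swap)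
    also have "\<dots> = (\<Sum>k\<in>P. a$i$k * Wt i j)"
      by (auto simp: g_def Wt_def sum_distrib_left intro!: sum.cong)
    finally show ?thesis by (simp add: sum_distrib_right)
  qed
  have R: "(\<Sum>k\<in>P. a$i$k * Wt k j) = (\<Sum>x\<in>M\<times>P. h x)"
  proof -
    have "(\<Sum>x\<in>M\<times>P. h x) = (\<Sum>F\<in>M. \<Sum>k\<in>P. h (F,k))" by (simp add: sum.cartesian_product)
    also have "\<dots> = (\<Sum>k\<in>P. \<Sum>F\<in>M. h (F,k))" by (rule sum.swap)
    also have "\<dots> = (\<Sum>k\<in>P. a$i$k * Wt k j)"
      by (auto simp: h_def Wt_def sum_distrib_left intro!: sum.cong)
    finally show ?thesis by simp
  qed
  define \<sigma> where "\<sigma> = (\<lambda>(F,k). if (i,k) \<in> F\<^sup>* then (F,k)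
      else (insert (k,i) (F - {(par F i, i)}), par F i))"
  have key: "\<sigma> x \<in> M\<times>P \<and> \<sigma> (\<sigma> x) = x \<and> g (\<sigma> x) = h x" if x: "x \<in> M\<times>P" for x
  proof -
    obtain F k where xFk: "x = (F,k)" and FM: "F \<in> M" and kP: "(k,i) \<in> arcs a"
      using x by (auto simp: P_def)
    have fo: "forest F" using M_props[OF FM] by auto
    show ?thesis
    proof (cases "(i,k) \<in> F\<^sup>*")
      case True
      then have "froot F k = froot F i" using root_step[OF fo] by blast
      then show ?thesis using True x by (simp add: xFk \<sigma>_def g_def h_def)
    next
      case False
      have "\<not> noparent F i"
      proof
        assume "noparent F i"
        then have "(i,k) \<in> F\<^sup>*" using max_reach[of a F i k] M_props(3)[OF FM] kP by auto
        then show False using False by simp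
      qed
      then obtain p where p: "(p,i) \<in> F" by (auto simp: noparent_def)
      have parp: "par F i = p" using par_eq[OF M_props(4)[OF FM] p] .
      define F' where "F' = insert (k,i) (F - {(p,i)})"
      note sw = swap1[OF FM kP False p, folded F'_def]
      have sx: "\<sigma> x = (F', p)" using False parp by (simp add: xFk \<sigma>_def F'_def)
      have indF': "indeg1 F'" using M_props(4)[OF sw(1)] .
      have park: "par F' i = k" using par_eq[OF indF' sw(3)] .
      have "\<sigma> (F',p) = (F,k)" using sw(4,5) park by (simp add: \<sigma>_def)
      moreover have "\<sigma> x \<in> M\<times>P" using sx sw(1,2) by (simp add: P_def)
      moreover have "g (\<sigma> x) = h x" using sx sw(6,7) by (simp add: g_def h_def xFk)
      ultimately show ?thesis using sx xFk by simp
    qed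
  qed
  have "(\<Sum>x\<in>M\<times>P. h x) = (\<Sum>x\<in>M\<times>P. g x)"
    by (rule sum.reindex_bij_witness[of _ \<sigma> \<sigma>]) (use key in auto)
  then show ?thesis using s1 s2 L R by simp
qed

end




context dg
begin

lemma indeg1_insert: "indeg1 F0 \<Longrightarrow> noparent F0 v \<Longrightarrow> indeg1 (insert (u,v) F0)"
  unfolding indeg1_def noparent_def by blast

lemma indeg1_mono: "indeg1 F \<Longrightarrow> F0 \<subseteq> F \<Longrightarrow> indeg1 F0"
  unfolding indeg1_def by blast

lemma swapL:
  assumes FM: "F \<in> M" and rt: "froot F i = j" and mj: "(m,j) \<in> arcs a"
  defines "c \<equiv> child F j m"
  defines "G \<equiv> insert (m,j) (F - {(j,c)})"
  shows "G \<in> M" "(j,c) \<in> arcs a" "froot G i = c" "par G j = m" "insert (j,c) (G - {(m,j)}) = F"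
        "weight a F * a$j$m = weight a G * a$c$j"
proof -
  have ind: "indeg1 F" and acy: "acyclic F" and FA: "F \<subseteq> arcs a" and fo: "forest F"
    using M_props[OF FM] by auto
  have np: "noparent F j" and ji: "(j,i) \<in> F\<^sup>*" using root_eq[OF fo] rt by auto
  have jm: "(j,m) \<in> F\<^sup>*" using max_reach[of a F j m] M_props(3)[OF FM] np mj by auto
  have "m \<noteq> j" using arcs_ne[OF mj] .
  then have "(j,m) \<in> F\<^sup>+" using rtranclD[OF jm] by simp
  from tranclD[OF this] obtain c' where c': "(j,c') \<in> F" "(c',m) \<in> F\<^sup>*" by blast
  have cc: "c = c'" using child_eq[OF fo c'] c_def by simp
  have jc: "(j,c) \<in> F" and cm: "(c,m) \<in> F\<^sup>*" using c' cc by auto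
  define F1 where "F1 = F - {(j,c)}"
  have Geq: "G = insert (m,j) F1" by (simp add: G_def F1_def)
  have mF1: "(m,j) \<notin> F1" using np by (auto simp: noparent_def F1_def)
  have cj: "(c,j) \<notin> F\<^sup>*"
  proof
    assume "(c,j) \<in> F\<^sup>*"
    then have "(j,j) \<in> F\<^sup>+" using jc by (meson rtrancl_into_trancl2)
    then show False using acy by (simp add: acyclic_def)
  qed
  have "card F > 0" using jc by (auto simp: card_gt_0_iff)
  then have cG: "card G = card F" using mF1 jc by (simp add: Geq F1_def card_insert_if card_Diff_singleton)
  have "noparent F1 j" using np by (auto simp: noparent_def F1_def)
  then have indG: "indeg1 G" unfolding Geq using indeg1_mono[OF ind, of F1] by (intro indeg1_insert) (auto simp: F1_def)
  have F1F: "F1 \<subseteq> F" by (auto simp: F1_def)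
  have closed: "(c,y) \<in> F\<^sup>*" if h: "(y,x) \<in> F1\<^sup>*" "(c,x) \<in> F\<^sup>*" for x y
    using h
  proof (induction rule: converse_rtrancl_induct)
    case base then show ?case by simp
  next
    case (step y z)
    have yzF: "(y,z) \<in> F" using step.hyps(1) F1F by auto
    have cz: "(c,z) \<in> F\<^sup>*" using step.IH step.prems by simp
    show ?case
    proof (cases "z = c")
      case True
      then have "y = j" using indeg1_eq[OF ind yzF] jc by simp
      then show ?thesis using step.hyps(1) True by (simp add: F1_def)
    next
      case False
      then obtain w where w: "(c,w) \<in> F\<^sup>*" "(w,z) \<in> F" using cz by (auto elim: rtranclE)
      then have "y = w" using indeg1_eq[OF ind yzF] by simp
      then show ?thesis using w by simp
    qed
  qed
  have "(j,m) \<notin> F1\<^sup>*" using closed[of j m] cm cj by blast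
  then have acyG: "acyclic G" using acyclic_subset[OF acy F1F] by (simp add: Geq)
  have GA: "G \<subseteq> arcs a" using FA mj by (auto simp: Geq F1_def)
  have foG: "forest G" using indG acyG by (simp add: forest_def)
  show "G \<in> M" using M_intro[OF FM GA foG cG] .
  show "(j,c) \<in> arcs a" using FA jc by auto
  have mjG: "(m,j) \<in> G" by (simp add: Geq)
  show "froot G i = c"
  proof -
    have npG: "noparent G c"
      unfolding noparent_def
    proof (intro allI notI)
      fix u assume uc: "(u,c) \<in> G"
      show False
      proof (cases "(u,c) = (m,j)")
        case True
        then have "(j,j) \<in> F" using jc by simp
        then show False using acy by (auto simp: acyclic_def)
      next
        case False
        then have "(u,c) \<in> F1" using uc by (auto simp: Geq)
        then show False using indeg1_eq[OF ind _ jc, of u] by (auto simp: F1_def)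
      qed
    qed
    have "(c,m) \<in> F1\<^sup>*" unfolding F1_def by (rule avoid_out[OF cm cj])
    then have "(c,m) \<in> G\<^sup>*" using rtrancl_mono[of F1 G] by (auto simp: Geq)
    then have cjG: "(c,j) \<in> G\<^sup>*" using mjG by (meson rtrancl.rtrancl_into_rtrancl)
    have reach: "(c,v) \<in> G\<^sup>*" if "(j,v) \<in> F\<^sup>*" for v
      using that
    proof (induction rule: rtrancl_induct)
      case base then show ?case using cjG .
    next
      case (step v y)
      show ?case
      proof (cases "(v,y) = (j,c)")
        case True then show ?thesis by simp
      next
        case False then have "(v,y) \<in> G" using step.hyps(2) by (simp add: Geq F1_def)
        then show ?thesis using step.IH by (meson rtrancl.rtrancl_into_rtrancl)
      qed
    qed
    show ?thesis using root_eq[OF foG] npG reach[OF ji] by blast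
  qed
  show "par G j = m" using par_eq[OF indG mjG] .
  show "insert (j,c) (G - {(m,j)}) = F" using mF1 jc by (auto simp: Geq F1_def)
  show "weight a F * a$j$m = weight a G * a$c$j"
    using weight_insert[OF mF1, of a] weight_remove[OF jc, of a] by (simp add: Geq F1_def algebra_simps)
qed

lemma swapR:
  assumes GM: "G \<in> M" and rt: "froot G i = k" and jk: "(j,k) \<in> arcs a"
  defines "p \<equiv> par G j"
  defines "F \<equiv> insert (j,k) (G - {(p,j)})"
  shows "F \<in> M" "(p,j) \<in> arcs a" "froot F i = j" "child F j p = k" "insert (p,j) (F - {(j,k)}) = G"
proof -
  have ind: "indeg1 G" and acy: "acyclic G" and GA: "G \<subseteq> arcs a" and fo: "forest G"
    using M_props[OF GM] by auto
  have np: "noparent G k" and ki: "(k,i) \<in> G\<^sup>*" using root_eq[OF fo] rt by auto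
  have kj: "(k,j) \<in> G\<^sup>*" using max_reach[of a G k j] M_props(3)[OF GM] np jk by auto
  have jnk: "j \<noteq> k" using arcs_ne[OF jk] .
  have "(k,j) \<in> G\<^sup>+" using rtranclD[OF kj] jnk by simp
  from tranclD2[OF this] obtain p' where p': "(k,p') \<in> G\<^sup>*" "(p',j) \<in> G" by blast
  have pp: "p = p'" using par_eq[OF ind p'(2)] p_def by simp
  have pj: "(p,j) \<in> G" and kp: "(k,p) \<in> G\<^sup>*" using p' pp by auto
  define G1 where "G1 = G - {(p,j)}"
  have Feq: "F = insert (j,k) G1" by (simp add: F_def G1_def)
  have jkG1: "(j,k) \<notin> G1" using np by (auto simp: noparent_def G1_def)
  have "card G > 0" using pj by (auto simp: card_gt_0_iff)
  moreover have "card G1 = card G - 1" using pj unfolding G1_def by (simp add: card_Diff_singleton)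
  moreover have "card F = Suc (card G1)" using jkG1 unfolding Feq by (simp add: card_insert_if)
  ultimately have cF: "card F = card G" by simp
  have "noparent G1 k" using np by (auto simp: noparent_def G1_def)
  then have indF: "indeg1 F" unfolding Feq using indeg1_mono[OF ind, of G1] by (intro indeg1_insert) (auto simp: G1_def)
  have npj: "noparent G1 j" using indeg1_eq[OF ind _ pj] by (auto simp: noparent_def G1_def)
  have "(k,j) \<notin> G1\<^sup>*" using noparent_rtrancl[OF npj] jnk by blast
  moreover have G1G: "G1 \<subseteq> G" by (auto simp: G1_def)
  ultimately have acyF: "acyclic F" using acyclic_subset[OF acy] by (simp add: Feq)
  have FA: "F \<subseteq> arcs a" using GA jk by (auto simp: Feq G1_def)
  have foF: "forest F" using indF acyF by (simp add: forest_def)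
  show "F \<in> M" using M_intro[OF GM FA foF cF] .
  show "(p,j) \<in> arcs a" using GA pj by auto
  have jkF: "(j,k) \<in> F" by (simp add: Feq)
  show "froot F i = j"
  proof -
    have npF: "noparent F j" using npj jnk by (auto simp: noparent_def Feq)
    have reach: "(j,v) \<in> F\<^sup>*" if "(k,v) \<in> G\<^sup>*" for v
      using that
    proof (induction rule: rtrancl_induct)
      case base then show ?case using jkF by auto
    next
      case (step v y)
      show ?case
      proof (cases "(v,y) = (p,j)")
        case True then show ?thesis by simp
      next
        case False then have "(v,y) \<in> F" using step.hyps(2) by (simp add: Feq G1_def)
        then show ?thesis using step.IH by (meson rtrancl.rtrancl_into_rtrancl)
      qed
    qed
    show ?thesis using root_eq[OF foF] npF reach[OF ki] by blast
  qed
  show "child F j p = k"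
  proof -
    have "(j,p) \<notin> G\<^sup>*"
    proof
      assume "(j,p) \<in> G\<^sup>*"
      then have "(j,j) \<in> G\<^sup>+" using pj by (meson rtrancl_into_trancl1)
      then show False using acy by (simp add: acyclic_def)
    qed
    then have "(k,p) \<in> G1\<^sup>*" unfolding G1_def by (rule avoid_in[OF kp])
    then have "(k,p) \<in> F\<^sup>*" using rtrancl_mono[of G1 F] by (auto simp: Feq)
    then show ?thesis using child_eq[OF foF jkF] by simp
  qed
  have "F - {(j,k)} = G1" using jkG1 unfolding Feq by auto
  moreover have "insert (p,j) G1 = G" using pj unfolding G1_def by auto
  ultimately show "insert (p,j) (F - {(j,k)}) = G" by simp
qed

lemma JL_sum:
  "Wt i j * (\<Sum>m\<in>UNIV-{j}. a$j$m) = (\<Sum>k\<in>UNIV-{j}. Wt i k * a$k$j)"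
proof -
  define Pin where "Pin = {m. (m,j) \<in> arcs a}"
  define Pout where "Pout = {k. (j,k) \<in> arcs a}"
  have s1: "(\<Sum>m\<in>UNIV-{j}. a$j$m) = (\<Sum>m\<in>Pin. a$j$m)"
    by (rule sum.mono_neutral_right) (use a_zero arcs_ne[of _ _ a] in \<open>auto simp: Pin_def\<close>)
  have s2: "(\<Sum>k\<in>UNIV-{j}. Wt i k * a$k$j) = (\<Sum>k\<in>Pout. Wt i k * a$k$j)"
    by (rule sum.mono_neutral_right) (use a_zero arcs_ne[of _ _ a] in \<open>auto simp: Pout_def\<close>)
  define SL where "SL = {x \<in> M\<times>Pin. froot (fst x) i = j}"
  define SR where "SR = {x \<in> M\<times>Pout. froot (fst x) i = snd x}"
  define gL where "gL = (\<lambda>x. weight a (fst x) * a$j$(snd x))"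
  define gR where "gR = (\<lambda>x. weight a (fst x) * a$(snd x)$j)"
  have L: "Wt i j * (\<Sum>m\<in>Pin. a$j$m) = (\<Sum>x\<in>SL. gL x)"
  proof -
    have "(\<Sum>x\<in>SL. gL x) = (\<Sum>x\<in>M\<times>Pin. if froot (fst x) i = j then gL x else 0)"
      unfolding SL_def by (rule sum.inter_filter) simp
    also have "\<dots> = (\<Sum>(F,m)\<in>M\<times>Pin. if froot F i = j then gL (F,m) else 0)"
      by (rule sum.cong) auto
    also have "\<dots> = (\<Sum>F\<in>M. \<Sum>m\<in>Pin. if froot F i = j then gL (F,m) else 0)"
      by (rule sum.cartesian_product[symmetric])
    also have "\<dots> = (\<Sum>F\<in>M. (if froot F i = j then weight a F else 0) * (\<Sum>m\<in>Pin. a$j$m))"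
      by (auto simp: gL_def sum_distrib_left intro!: sum.cong)
    also have "\<dots> = Wt i j * (\<Sum>m\<in>Pin. a$j$m)" by (simp add: Wt_def sum_distrib_right)
    finally show ?thesis by simp
  qed
  have R: "(\<Sum>k\<in>Pout. Wt i k * a$k$j) = (\<Sum>x\<in>SR. gR x)"
  proof -
    have "(\<Sum>x\<in>SR. gR x) = (\<Sum>x\<in>M\<times>Pout. if froot (fst x) i = snd x then gR x else 0)"
      unfolding SR_def by (rule sum.inter_filter) simp
    also have "\<dots> = (\<Sum>(F,k)\<in>M\<times>Pout. if froot F i = k then gR (F,k) else 0)"
      by (rule sum.cong) auto
    also have "\<dots> = (\<Sum>F\<in>M. \<Sum>k\<in>Pout. if froot F i = k then gR (F,k) else 0)"
      by (rule sum.cartesian_product[symmetric])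
    also have "\<dots> = (\<Sum>k\<in>Pout. \<Sum>F\<in>M. if froot F i = k then gR (F,k) else 0)"
      by (rule sum.swap)
    also have "\<dots> = (\<Sum>k\<in>Pout. Wt i k * a$k$j)"
      by (auto simp: gR_def Wt_def sum_distrib_right intro!: sum.cong)
    finally show ?thesis by simp
  qed
  define \<phi> where "\<phi> = (\<lambda>(F,m). (insert (m,j) (F - {(j, child F j m)}), child F j m))"
  define \<psi> where "\<psi> = (\<lambda>(G,k). (insert (j,k) (G - {(par G j, j)}), par G j))"
  have "(\<Sum>x\<in>SL. gL x) = (\<Sum>x\<in>SR. gR x)"
  proof (rule sum.reindex_bij_witness[of _ \<psi> \<phi>])
    fix x assume x: "x \<in> SL"
    obtain F m where xFm: "x = (F,m)" by (cases x)
    have FM: "F \<in> M" and mj: "(m,j) \<in> arcs a" and rt: "froot F i = j"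
      using x unfolding xFm SL_def Pin_def by simp_all
    note sw = swapL[OF FM rt mj]
    show "\<psi> (\<phi> x) = x" by (simp only: xFm \<phi>_def \<psi>_def prod.case sw(4) sw(5))
    show "\<phi> x \<in> SR" unfolding xFm \<phi>_def prod.case SR_def Pout_def using sw(1,2,3) by simp
    show "gR (\<phi> x) = gL x" unfolding xFm \<phi>_def prod.case gR_def gL_def fst_conv snd_conv using sw(6) by simp
  next
    fix y assume y: "y \<in> SR"
    obtain G k where yGk: "y = (G,k)" by (cases y)
    have GM: "G \<in> M" and jk: "(j,k) \<in> arcs a" and rt: "froot G i = k"
      using y unfolding yGk SR_def Pout_def by simp_all
    note sw = swapR[OF GM rt jk]
    show "\<phi> (\<psi> y) = y" by (simp only: yGk \<phi>_def \<psi>_def prod.case sw(4) sw(5))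
    show "\<psi> y \<in> SL" unfolding yGk \<psi>_def prod.case SL_def Pin_def using sw(1,2,3) by simp
  qed
  then show ?thesis using s1 s2 L R by simp
qed

end




definition swp :: "('n \<times> 'n) set \<Rightarrow> ('n \<times> 'n) set \<Rightarrow> 'n set \<Rightarrow> ('n \<times> 'n) set" where
  "swp F G K = {e\<in>F. snd e \<notin> K} \<union> {e\<in>G. snd e \<in> K}"

lemma swp_swp: "swp (swp F G K) (swp G F K) K = F"
  by (auto simp: swp_def)

lemma weight_split:
  fixes a :: "real^'n^'n"
  shows "weight a A = weight a {e\<in>A. snd e \<notin> K} * weight a {e\<in>A. snd e \<in> K}"
proof -
  have "A = {e\<in>A. snd e \<notin> K} \<union> {e\<in>A. snd e \<in> K}" by auto
  then have "weight a A = weight a ({e\<in>A. snd e \<notin> K} \<union> {e\<in>A. snd e \<in> K})" by simp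
  also have "\<dots> = weight a {e\<in>A. snd e \<notin> K} * weight a {e\<in>A. snd e \<in> K}"
    unfolding weight_def by (rule prod.union_disjoint) auto
  finally show ?thesis .
qed

lemma weight_swp:
  fixes a :: "real^'n^'n"
  shows "weight a (swp F G K) = weight a {e\<in>F. snd e \<notin> K} * weight a {e\<in>G. snd e \<in> K}"
  unfolding swp_def weight_def by (rule prod.union_disjoint) auto

context dg
begin

definition Anc :: "'n \<Rightarrow> 'n set" where "Anc r = {v. (v,r) \<in> (arcs a)\<^sup>*}"

lemma Anc_self: "r \<in> Anc r" by (simp add: Anc_def)

lemma S1: "F \<in> M \<Longrightarrow> noparent F r \<Longrightarrow> v \<in> Anc r \<Longrightarrow> (r,v) \<in> F\<^sup>*"
  using max_reach[of a F r v] M_props(3) by (simp add: Anc_def)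

lemma S2': "(x,y) \<in> (arcs a)\<^sup>* \<Longrightarrow> y \<in> Anc r \<Longrightarrow> x \<in> Anc r"
  unfolding Anc_def by (meson mem_Collect_eq rtrancl_trans)

lemma S2: "F \<subseteq> arcs a \<Longrightarrow> (u,v) \<in> F \<Longrightarrow> v \<in> Anc r \<Longrightarrow> u \<in> Anc r"
  using S2'[of u v r] by blast

lemma rtr_arcs: "F \<subseteq> arcs a \<Longrightarrow> (x,y) \<in> F\<^sup>* \<Longrightarrow> (x,y) \<in> (arcs a)\<^sup>*"
  using rtrancl_mono by blast

lemma S3:
  assumes FM: "F \<in> M" and GM: "G \<in> M" and np: "noparent F r"
  shows "froot G r \<in> Anc r" "Anc (froot G r) = Anc r"
proof -
  let ?s = "froot G r"
  have foG: "forest G" using M_props[OF GM] by simp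
  have "(?s, r) \<in> G\<^sup>*" using root_props[OF foG] by simp
  then have sr: "(?s, r) \<in> (arcs a)\<^sup>*" using rtr_arcs M_props(1)[OF GM] by blast
  then show sA: "?s \<in> Anc r" by (simp add: Anc_def)
  have "(r, ?s) \<in> F\<^sup>*" using S1[OF FM np sA] .
  then have rs: "(r, ?s) \<in> (arcs a)\<^sup>*" using rtr_arcs M_props(1)[OF FM] by blast
  show "Anc ?s = Anc r"
    using sr rs unfolding Anc_def by (auto intro: rtrancl_trans)
qed

lemma S_card:
  assumes FM: "F \<in> M" and np: "noparent F s"
  shows "card {e\<in>F. snd e \<in> Anc s} + 1 = card (Anc s)"
proof -
  let ?K = "Anc s"
  have ind: "indeg1 F" using M_props[OF FM] by simp
  have bij: "bij_betw snd {e\<in>F. snd e \<in> ?K} (?K - {s})"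
    unfolding bij_betw_def
  proof
    show "inj_on snd {e\<in>F. snd e \<in> ?K}"
    proof (rule inj_onI)
      fix x y assume "x \<in> {e\<in>F. snd e \<in> ?K}" "y \<in> {e\<in>F. snd e \<in> ?K}" "snd x = snd y"
      then show "x = y" using indeg1_eq[OF ind, of "fst x" "snd x" "fst y"] by (cases x, cases y) auto
    qed
    show "snd ` {e\<in>F. snd e \<in> ?K} = ?K - {s}"
    proof
      show "snd ` {e\<in>F. snd e \<in> ?K} \<subseteq> ?K - {s}" using np by (force simp: noparent_def)
      show "?K - {s} \<subseteq> snd ` {e\<in>F. snd e \<in> ?K}"
      proof
        fix v assume v: "v \<in> ?K - {s}"
        then have "(s,v) \<in> F\<^sup>*" using S1[OF FM np] by simp
        moreover have "s \<noteq> v" using v by auto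
        ultimately have "(s,v) \<in> F\<^sup>+" using rtranclD by metis
        from tranclD2[OF this] obtain u where uv: "(u,v) \<in> F" by blast
        have "(u,v) \<in> {e\<in>F. snd e \<in> ?K}" using uv v by simp
        then show "v \<in> snd ` {e\<in>F. snd e \<in> ?K}" by (rule image_eqI[rotated]) simp
      qed
    qed
  qed
  have "card {e\<in>F. snd e \<in> ?K} = card (?K - {s})" using bij_betw_same_card[OF bij] .
  moreover have "card ?K > 0" using Anc_self[of s] by (auto simp: card_gt_0_iff)
  ultimately show ?thesis using Anc_self[of s] by simp
qed

lemma swap_M:
  assumes FM: "F \<in> M" and GM: "G \<in> M" and npF: "noparent F r" and npG: "noparent G s"
    and As: "Anc s = Anc r"
  shows "swp F G (Anc r) \<in> M"
proof -
  define K where "K = Anc r"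
  define F' where "F' = swp F G K"
  have indF: "indeg1 F" and acyF: "acyclic F" and FA: "F \<subseteq> arcs a" using M_props[OF FM] by auto
  have indG: "indeg1 G" and acyG: "acyclic G" and GA: "G \<subseteq> arcs a" using M_props[OF GM] by auto
  have F'A: "F' \<subseteq> arcs a" using FA GA by (auto simp: F'_def swp_def)
  have F'in: "(u,v) \<in> G" if "(u,v) \<in> F'" "v \<in> K" for u v using that by (auto simp: F'_def swp_def)
  have F'out: "(u,v) \<in> F" if "(u,v) \<in> F'" "v \<notin> K" for u v using that by (auto simp: F'_def swp_def)
  have indF': "indeg1 F'"
    unfolding indeg1_def
  proof (intro allI impI)
    fix u u' v assume h: "(u,v) \<in> F'" "(u',v) \<in> F'"
    show "u = u'"
    proof (cases "v \<in> K")
      case True show ?thesis by (rule indeg1_eq[OF indG F'in[OF h(1) True] F'in[OF h(2) True]])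
    next
      case False show ?thesis by (rule indeg1_eq[OF indF F'out[OF h(1) False] F'out[OF h(2) False]])
    qed
  qed
  have inK: "x \<in> K \<and> (x,y) \<in> G\<^sup>*" if "(x,y) \<in> F'\<^sup>*" "y \<in> K" for x y
    using that
  proof (induction rule: converse_rtrancl_induct)
    case base then show ?case by simp
  next
    case (step x z)
    then have zK: "z \<in> K" and zy: "(z,y) \<in> G\<^sup>*" by auto
    have xz: "(x,z) \<in> G" using F'in[OF step.hyps(1) zK] .
    have "x \<in> K" using S2[OF GA xz] zK by (simp add: K_def)
    then show ?case using xz zy by (meson converse_rtrancl_into_rtrancl)
  qed
  have outK: "y \<notin> K \<and> (x,y) \<in> F\<^sup>*" if "(x,y) \<in> F'\<^sup>*" "x \<notin> K" for x y
    using that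
  proof (induction rule: rtrancl_induct)
    case base then show ?case by simp
  next
    case (step w z)
    then have wK: "w \<notin> K" and xw: "(x,w) \<in> F\<^sup>*" by auto
    have zK: "z \<notin> K"
    proof
      assume zK: "z \<in> K"
      then have "(w,z) \<in> G" using F'in[OF step.hyps(2)] by simp
      then have "w \<in> K" using S2[OF GA] zK by (simp add: K_def)
      then show False using wK by simp
    qed
    then have "(w,z) \<in> F" using F'out[OF step.hyps(2)] by simp
    then show ?case using zK xw by (meson rtrancl.rtrancl_into_rtrancl)
  qed
  have acyF': "acyclic F'"
    unfolding acyclic_def
  proof (intro allI notI)
    fix z assume "(z,z) \<in> F'\<^sup>+"
    from tranclD[OF this] obtain w where zw: "(z,w) \<in> F'" and wz: "(w,z) \<in> F'\<^sup>*" by blast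
    show False
    proof (cases "z \<in> K")
      case True
      then have "w \<in> K" "(w,z) \<in> G\<^sup>*" using inK[OF wz] by auto
      then have "(z,w) \<in> G" using F'in[OF zw] by simp
      then have "(z,z) \<in> G\<^sup>+" using \<open>(w,z) \<in> G\<^sup>*\<close> by (meson rtrancl_into_trancl2)
      then show False using acyG by (simp add: acyclic_def)
    next
      case False
      then have "w \<notin> K" using outK[OF r_into_rtrancl[OF zw]] by simp
      then have "(z,w) \<in> F" using F'out[OF zw] by simp
      moreover have "(w,z) \<in> F\<^sup>*" using outK[OF wz \<open>w \<notin> K\<close>] by simp
      ultimately have "(z,z) \<in> F\<^sup>+" by (meson rtrancl_into_trancl2)
      then show False using acyF by (simp add: acyclic_def)
    qed
  qed
  have cF: "card F' = card F"
  proof -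
    have c1: "card F' = card {e\<in>F. snd e \<notin> K} + card {e\<in>G. snd e \<in> K}"
      unfolding F'_def swp_def by (rule card_Un_disjoint) auto
    have "F = {e\<in>F. snd e \<notin> K} \<union> {e\<in>F. snd e \<in> K}" by auto
    then have c2: "card F = card {e\<in>F. snd e \<notin> K} + card {e\<in>F. snd e \<in> K}"
      by (metis (no_types, lifting) card_Un_disjoint disjoint_iff finite mem_Collect_eq)
    have "card {e\<in>F. snd e \<in> K} + 1 = card K" using S_card[OF FM npF] by (simp add: K_def)
    moreover have "card {e\<in>G. snd e \<in> K} + 1 = card K" using S_card[OF GM npG] As by (simp add: K_def)
    ultimately show ?thesis using c1 c2 by simp
  qed
  have "forest F'" using indF' acyF' by (simp add: forest_def)
  then show ?thesis using M_intro[OF FM F'A _ cF] by (simp add: F'_def K_def)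
qed

lemma swap_root:
  assumes FM: "F \<in> M" and GM: "G \<in> M" and npF: "noparent F r" and npG: "noparent G s"
    and As: "Anc s = Anc r" and rx: "(r,x) \<in> F\<^sup>*"
  shows "froot (swp F G (Anc r)) x = s"
proof -
  define K where "K = Anc r"
  define F' where "F' = swp F G K"
  have F'M: "F' \<in> M" using swap_M[OF FM GM npF npG As] by (simp add: F'_def K_def)
  have foF': "forest F'" using M_props[OF F'M] by simp
  have GA: "G \<subseteq> arcs a" using M_props[OF GM] by simp
  have sK: "s \<in> K" using Anc_self[of s] As by (simp add: K_def)
  have npF': "noparent F' s" using npG sK by (auto simp: noparent_def F'_def swp_def)
  have G2F': "(y,z) \<in> F'\<^sup>*" if "(y,z) \<in> G\<^sup>*" "z \<in> K" for y z
    using that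
  proof (induction rule: converse_rtrancl_induct)
    case base then show ?case by simp
  next
    case (step y w)
    have "(w,z) \<in> (arcs a)\<^sup>*" using rtr_arcs[OF GA step.hyps(2)] .
    then have wK: "w \<in> K" using S2' step.prems by (simp add: K_def)
    then have "(y,w) \<in> F'" using step.hyps(1) by (auto simp: F'_def swp_def)
    then show ?case using step.IH step.prems by (meson converse_rtrancl_into_rtrancl)
  qed
  have sv: "(s,v) \<in> F'\<^sup>*" if "v \<in> K" for v
  proof -
    have "(s,v) \<in> G\<^sup>*" using S1[OF GM npG] that As by (simp add: K_def)
    then show ?thesis using G2F' that by blast
  qed
  have "(s,x) \<in> F'\<^sup>*" using rx
  proof (induction rule: rtrancl_induct)
    case base then show ?case using sv Anc_self[of r] by (simp add: K_def)
  next
    case (step w z)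
    show ?case
    proof (cases "z \<in> K")
      case True then show ?thesis using sv by simp
    next
      case False
      then have "(w,z) \<in> F'" using step.hyps(2) by (auto simp: F'_def swp_def)
      then show ?thesis using step.IH by (meson rtrancl.rtrancl_into_rtrancl)
    qed
  qed
  then have "froot F' x = s" using root_eq[OF foF'] npF' by blast
  then show ?thesis by (simp add: F'_def K_def)
qed

lemma J2_sum: "(\<Sum>k\<in>UNIV. Wt i k * Wt k j) = W * Wt i j"
proof -
  define h where "h = (\<lambda>(F,G). if froot G (froot F i) = j then weight a F * weight a G else 0)"
  define g where "g = (\<lambda>(F,G). if froot F i = j then weight a F * weight a G else 0)"
  have L: "(\<Sum>k\<in>UNIV. Wt i k * Wt k j) = (\<Sum>x\<in>M\<times>M. h x)"
  proof -
    have "(\<Sum>k\<in>UNIV. Wt i k * Wt k j) = (\<Sum>k\<in>UNIV. \<Sum>F\<in>M. if froot F i = k then weight a F * Wt k j else 0)"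
      unfolding Wt_def[of i] by (auto simp: sum_distrib_right intro!: sum.cong)
    also have "\<dots> = (\<Sum>F\<in>M. \<Sum>k\<in>UNIV. if froot F i = k then weight a F * Wt k j else 0)"
      by (rule sum.swap)
    also have "\<dots> = (\<Sum>F\<in>M. weight a F * Wt (froot F i) j)"
      by (simp add: sum.delta)
    also have "\<dots> = (\<Sum>F\<in>M. \<Sum>G\<in>M. h (F,G))"
      unfolding Wt_def h_def by (auto simp: sum_distrib_left intro!: sum.cong)
    also have "\<dots> = (\<Sum>(F,G)\<in>M\<times>M. h (F,G))"
      by (rule sum.cartesian_product)
    also have "\<dots> = (\<Sum>x\<in>M\<times>M. h x)" by (rule sum.cong) auto
    finally show ?thesis .
  qed
  have R: "W * Wt i j = (\<Sum>x\<in>M\<times>M. g x)"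
  proof -
    have "W * Wt i j = (\<Sum>F\<in>M. \<Sum>G\<in>M. g (F,G))"
      unfolding W_def Wt_def g_def
      by (auto simp: sum_distrib_left sum_distrib_right mult.commute intro!: sum.cong)
    also have "\<dots> = (\<Sum>(F,G)\<in>M\<times>M. g (F,G))"
      by (rule sum.cartesian_product)
    also have "\<dots> = (\<Sum>x\<in>M\<times>M. g x)" by (rule sum.cong) auto
    finally show ?thesis .
  qed
  define \<sigma> where "\<sigma> = (\<lambda>(F,G). (swp F G (Anc (froot F i)), swp G F (Anc (froot F i))))"
  have key: "\<sigma> x \<in> M\<times>M \<and> \<sigma> (\<sigma> x) = x \<and> g (\<sigma> x) = h x" if x: "x \<in> M\<times>M" for x
  proof -
    obtain F G where xFG: "x = (F,G)" by (cases x)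
    have FM: "F \<in> M" and GM: "G \<in> M" using x xFG by auto
    define r where "r = froot F i"
    define s where "s = froot G r"
    have foF: "forest F" and foG: "forest G" using M_props FM GM by auto
    have npF: "noparent F r" and ri: "(r,i) \<in> F\<^sup>*" using root_props[OF foF] by (auto simp: r_def)
    have npG: "noparent G s" using root_props[OF foG] by (auto simp: s_def)
    have As: "Anc s = Anc r" using S3[OF FM GM npF] by (simp add: s_def)
    define F' where "F' = swp F G (Anc r)"
    define G' where "G' = swp G F (Anc r)"
    have sx: "\<sigma> x = (F', G')" by (simp add: xFG \<sigma>_def F'_def G'_def r_def)
    have F'M: "F' \<in> M" using swap_M[OF FM GM npF npG As] by (simp add: F'_def)
    have G'M: "G' \<in> M" using swap_M[OF GM FM npG npF As[symmetric]] As by (simp add: G'_def)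
    have rF': "froot F' i = s" using swap_root[OF FM GM npF npG As ri] by (simp add: F'_def)
    have "\<sigma> (F',G') = (swp F' G' (Anc s), swp G' F' (Anc s))" by (simp add: \<sigma>_def rF')
    also have "\<dots> = (F,G)" unfolding As F'_def G'_def swp_swp ..
    finally have ss: "\<sigma> (\<sigma> x) = x" using sx xFG by simp
    have w: "weight a F' * weight a G' = weight a F * weight a G"
      unfolding F'_def G'_def weight_swp weight_split[of a F "Anc r"] weight_split[of a G "Anc r"]
      by (simp add: algebra_simps)
    have "g (\<sigma> x) = g (F', G')" by (simp only: sx)
    also have "\<dots> = h (F,G)" using rF' w by (simp add: g_def h_def r_def s_def)
    finally have "g (\<sigma> x) = h x" using xFG by simp
    then show ?thesis using ss sx F'M G'M by simp
  qed
  have "(\<Sum>x\<in>M\<times>M. h x) = (\<Sum>x\<in>M\<times>M. g x)"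
    by (rule sum.reindex_bij_witness[of _ \<sigma> \<sigma>]) (use key in auto)
  then show ?thesis using L R by simp
qed

lemma trace_sum:
  assumes F0: "F0 \<in> M"
  shows "(\<Sum>i\<in>UNIV. Wt i i) = real (CARD('n) - card F0) * W"
proof -
  have "(\<Sum>i\<in>UNIV. Wt i i) = (\<Sum>F\<in>M. \<Sum>i\<in>UNIV. if froot F i = i then weight a F else 0)"
    unfolding Wt_def by (rule sum.swap)
  also have "\<dots> = (\<Sum>F\<in>M. real (CARD('n) - card F0) * weight a F)"
  proof (rule sum.cong[OF refl])
    fix F assume FM: "F \<in> M"
    have fo: "forest F" using M_props[OF FM] by simp
    have "(\<Sum>i\<in>UNIV. if froot F i = i then weight a F else 0) = (\<Sum>i\<in>{i. noparent F i}. weight a F)"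
    proof -
      have e: "froot F i = i \<longleftrightarrow> noparent F i" for i using root_eq[OF fo, of i i] by simp
      show ?thesis unfolding e by (simp add: sum.inter_filter[symmetric])
    qed
    also have "\<dots> = real (card {i. noparent F i}) * weight a F" by simp
    also have "card {i. noparent F i} = CARD('n) - card F0"
      using forest_card[OF fo] M_card[OF FM F0] by simp
    finally show "(\<Sum>i\<in>UNIV. if froot F i = i then weight a F else 0) = real (CARD('n) - card F0) * weight a F" .
  qed
  also have "\<dots> = real (CARD('n) - card F0) * W" by (simp add: W_def sum_distrib_left)
  finally show ?thesis .
qed

end




theorem proposition5:
  fixes a :: "real^'n^'n"
  assumes nonneg: "\<And>i j. i \<noteq> j \<Longrightarrow> a $ i $ j \<ge> 0"
  shows "rank (norm_max_out_forest_matrix a) = out_forest_dim a \<and>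
         norm_max_out_forest_matrix a ** norm_max_out_forest_matrix a = norm_max_out_forest_matrix a \<and>
         kirchhoff a ** norm_max_out_forest_matrix a = 0 \<and>
         norm_max_out_forest_matrix a ** kirchhoff a = 0"
proof -
  interpret dg a using nonneg by unfold_locales
  define J where "J = norm_max_out_forest_matrix a"
  obtain F0 where F0: "F0 \<in> M" using ex_max by (auto simp: M_def)
  have Jij: "J $ i $ j = Wt i j / W" for i j unfolding J_def by (rule J_eq)
  have Wpos: "W > 0" by (rule W_pos)
  have JJ: "J ** J = J"
  proof -
    have "(J ** J) $ i $ j = J $ i $ j" for i j
    proof -
      have "(J ** J) $ i $ j = (\<Sum>k\<in>UNIV. Wt i k / W * (Wt k j / W))"
        by (simp add: matrix_matrix_mult_def Jij)
      also have "\<dots> = (\<Sum>k\<in>UNIV. Wt i k * Wt k j) / (W * W)"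
        by (simp add: sum_divide_distrib)
      also have "\<dots> = W * Wt i j / (W * W)" by (simp add: J2_sum)
      also have "\<dots> = J $ i $ j" using Wpos by (simp add: Jij)
      finally show ?thesis .
    qed
    then show ?thesis by (simp add: vec_eq_iff)
  qed
  have LJ: "kirchhoff a ** J = 0"
  proof -
    have "(kirchhoff a ** J) $ i $ j = 0" for i j
    proof -
      let ?f = "\<lambda>k. kirchhoff a $ i $ k * J $ k $ j"
      have "(kirchhoff a ** J) $ i $ j = (\<Sum>k\<in>UNIV. ?f k)"
        by (simp add: matrix_matrix_mult_def)
      also have "\<dots> = ?f i + (\<Sum>k\<in>UNIV-{i}. ?f k)"
        by (rule sum.remove) auto
      also have "(\<Sum>k\<in>UNIV-{i}. ?f k) = (\<Sum>k\<in>UNIV-{i}. - (a$i$k * Wt k j) / W)"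
        by (rule sum.cong) (auto simp: kirchhoff_def Jij)
      also have "?f i = (\<Sum>k\<in>UNIV-{i}. a$i$k) * Wt i j / W"
        by (simp add: kirchhoff_def Jij)
      also have "(\<Sum>k\<in>UNIV-{i}. a$i$k) * Wt i j / W + (\<Sum>k\<in>UNIV-{i}. - (a$i$k * Wt k j) / W)
          = ((\<Sum>k\<in>UNIV-{i}. a$i$k) * Wt i j - (\<Sum>k\<in>UNIV-{i}. a$i$k * Wt k j)) / W"
        by (simp add: sum_divide_distrib[symmetric] sum_negf diff_divide_distrib)
      also have "\<dots> = 0" using LJ_sum[of i j] by simp
      finally show ?thesis .
    qed
    then show ?thesis by (simp add: vec_eq_iff)
  qed
  have JL: "J ** kirchhoff a = 0"
  proof -
    have "(J ** kirchhoff a) $ i $ j = 0" for i j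
    proof -
      let ?f = "\<lambda>k. J $ i $ k * kirchhoff a $ k $ j"
      have "(J ** kirchhoff a) $ i $ j = (\<Sum>k\<in>UNIV. ?f k)"
        by (simp add: matrix_matrix_mult_def)
      also have "\<dots> = ?f j + (\<Sum>k\<in>UNIV-{j}. ?f k)"
        by (rule sum.remove) auto
      also have "(\<Sum>k\<in>UNIV-{j}. ?f k) = (\<Sum>k\<in>UNIV-{j}. - (Wt i k * a$k$j) / W)"
        by (rule sum.cong) (auto simp: kirchhoff_def Jij)
      also have "?f j = Wt i j * (\<Sum>m\<in>UNIV-{j}. a$j$m) / W"
        by (simp add: kirchhoff_def Jij)
      also have "Wt i j * (\<Sum>m\<in>UNIV-{j}. a$j$m) / W + (\<Sum>k\<in>UNIV-{j}. - (Wt i k * a$k$j) / W)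
          = (Wt i j * (\<Sum>m\<in>UNIV-{j}. a$j$m) - (\<Sum>k\<in>UNIV-{j}. Wt i k * a$k$j)) / W"
        by (simp add: sum_divide_distrib[symmetric] sum_negf diff_divide_distrib)
      also have "\<dots> = 0" using JL_sum[of i j] by simp
      finally show ?thesis .
    qed
    then show ?thesis by (simp add: vec_eq_iff)
  qed
  have "real (rank J) = trace J" by (rule rank_idempotent[OF JJ])
  also have "trace J = (\<Sum>i\<in>UNIV. Wt i i) / W" by (simp add: trace_def Jij sum_divide_distrib)
  also have "\<dots> = real (CARD('n) - card F0)" using trace_sum[OF F0] Wpos by simp
  finally have rk: "rank J = CARD('n) - card F0" by simp
  have "out_forest_dim a = CARD('n) - card F0"
  proof -
    define F1 where "F1 = (SOME F. max_out_forest a F)"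
    have "max_out_forest a F1" unfolding F1_def by (rule someI_ex[OF ex_max])
    then have F1M: "F1 \<in> M" by (simp add: M_def)
    have fo: "forest F1" using M_props[OF F1M] by simp
    have "out_forest_dim a = num_trees F1" by (simp add: out_forest_dim_def F1_def)
    also have "\<dots> = card {r. noparent F1 r}" by (rule num_trees_eq[OF fo])
    also have "\<dots> = CARD('n) - card F0" using forest_card[OF fo] M_card[OF F1M F0] by simp
    finally show ?thesis .
  qed
  then show ?thesis using rk JJ LJ JL by (simp add: J_def)
qed


end
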